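(* Let $\alpha>-1$ and consider composition operators $C_\phi f=f\circ\phi$ on $L^2_a(dA_\alpha)$. If $\phi(z)=-z$ then $W(C_{\phi})=[-1,1]$, and if $\phi(z)=e^{2\pi i/n}z$ with an integer $n>2$, then $W(C_{\phi})$ is the closed regular polygonal region with $n$ sides inscribed in the unit circle.
   Context: $L^2_a(dA_\alpha)$ is the weighted Bergman space of analytic $f$ on the unit disc $\mathbb{D}$ with $\int_{\mathbb{D}}|f|^2dA_\alpha<\infty$, $dA_{\alpha}(z)=(\alpha+1)(1-|z|^2)^{\alpha}dA(z)$, $dA$ normalized area measure. $W(T)=\{\langle Tf,f\rangle:\|f\|=1\}$ is the numerical range. *)

theory Defs
  imports "HOL-Analysis.Analysis"
begin

text \<open>Weight of the measure dA_alpha with respect to Lebesgue measure on the plane: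
  dA_alpha(z) = (alpha+1)(1-|z|^2)^alpha dA(z), with dA = dx dy / pi the normalized area measure.\<close>
definition bergman_weight :: "real \<Rightarrow> complex \<Rightarrow> real" where
  "bergman_weight \<alpha> z = (\<alpha> + 1) / pi * (1 - (cmod z)\<^sup>2) powr \<alpha>"

definition bergman_space :: "real \<Rightarrow> (complex \<Rightarrow> complex) set" where
  "bergman_space \<alpha> = {f. f holomorphic_on ball 0 1 \<and>
      set_integrable lborel (ball 0 1) (\<lambda>z. bergman_weight \<alpha> z * (cmod (f z))\<^sup>2)}"

definition bergman_inner :: "real \<Rightarrow> (complex \<Rightarrow> complex) \<Rightarrow> (complex \<Rightarrow> complex) \<Rightarrow> complex" where
  "bergman_inner \<alpha> f g = (LINT z : ball 0 1 | lborel. complex_of_real (bergman_weight \<alpha> z) * f z * cnj (g z))"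

definition bergman_norm :: "real \<Rightarrow> (complex \<Rightarrow> complex) \<Rightarrow> real" where
  "bergman_norm \<alpha> f = sqrt (LINT z : ball 0 1 | lborel. bergman_weight \<alpha> z * (cmod (f z))\<^sup>2)"

definition comp_numerical_range :: "real \<Rightarrow> (complex \<Rightarrow> complex) \<Rightarrow> complex set" where
  "comp_numerical_range \<alpha> \<phi> =
     {bergman_inner \<alpha> (f \<circ> \<phi>) f | f. f \<in> bergman_space \<alpha> \<and> bergman_norm \<alpha> f = 1}"

end

theory Submission
  imports Defs
begin


lemma Complex_meas[measurable]: "(\<lambda>p::real\<times>real. Complex (fst p) (snd p)) \<in> borel_measurable (lborel \<Otimes>\<^sub>M lborel)"
proof -
  have "(\<lambda>p::real\<times>real. Complex (fst p) (snd p)) = (\<lambda>p. complex_of_real (fst p) + \<i> * complex_of_real (snd p))"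
    by (auto simp: Complex_eq)
  moreover have "(\<lambda>p::real\<times>real. complex_of_real (fst p) + \<i> * complex_of_real (snd p)) \<in> borel_measurable (lborel \<Otimes>\<^sub>M lborel)"
    by measurable
  ultimately show ?thesis by simp
qed

lemma lborel_complex: "(lborel :: complex measure) = distr (lborel \<Otimes>\<^sub>M lborel) borel (\<lambda>p. Complex (fst p) (snd p))"
proof (rule lborel_eqI)
  fix l u :: complex
  assume le: "\<And>b. b \<in> Basis \<Longrightarrow> l \<bullet> b \<le> u \<bullet> b"
  have "Re l \<le> Re u" "Im l \<le> Im u" using le[of 1] le[of \<i>] by (auto simp: Basis_complex_def)
  have pre: "(\<lambda>p. Complex (fst p) (snd p)) -` box l u \<inter> space (lborel \<Otimes>\<^sub>M lborel) = {Re l<..<Re u} \<times> {Im l<..<Im u}"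
    by (auto simp: box_complex_eq space_pair_measure)
  have "emeasure (distr (lborel \<Otimes>\<^sub>M lborel) borel (\<lambda>p. Complex (fst p) (snd p))) (box l u)
     = emeasure (lborel \<Otimes>\<^sub>M lborel) ({Re l<..<Re u} \<times> {Im l<..<Im u})"
    by (subst emeasure_distr) (auto simp: pre)
  also have "\<dots> = ennreal ((Re u - Re l) * (Im u - Im l))"
    using \<open>Re l \<le> Re u\<close> \<open>Im l \<le> Im u\<close>
    by (simp add: lborel.emeasure_pair_measure_Times ennreal_mult)
  also have "(Re u - Re l) * (Im u - Im l) = (\<Prod>b\<in>Basis. (u - l) \<bullet> b)"
    by (simp add: Basis_complex_def)
  finally show "emeasure (distr (lborel \<Otimes>\<^sub>M lborel) borel (\<lambda>p. Complex (fst p) (snd p))) (box l u) = (\<Prod>b\<in>Basis. (u - l) \<bullet> b)" .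
qed simp

lemma nn_integral_complex_xy:
  assumes [measurable]: "f \<in> borel_measurable (borel :: complex measure)"
  shows "(\<integral>\<^sup>+z. f z \<partial>lborel) = (\<integral>\<^sup>+x. \<integral>\<^sup>+y. f (Complex x y) \<partial>lborel \<partial>lborel)"
proof -
  have "(\<integral>\<^sup>+z. f z \<partial>lborel) = (\<integral>\<^sup>+p. f (Complex (fst p) (snd p)) \<partial>(lborel \<Otimes>\<^sub>M lborel))"
    by (subst lborel_complex) (simp add: nn_integral_distr)
  also have "\<dots> = (\<integral>\<^sup>+x. \<integral>\<^sup>+y. f (Complex x y) \<partial>lborel \<partial>lborel)"
    by (subst lborel.nn_integral_fst[symmetric]) auto
  finally show ?thesis .
qed

lemma nn_integral_complex_yx:
  assumes [measurable]: "f \<in> borel_measurable (borel :: complex measure)"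
  shows "(\<integral>\<^sup>+z. f z \<partial>lborel) = (\<integral>\<^sup>+y. \<integral>\<^sup>+x. f (Complex x y) \<partial>lborel \<partial>lborel)"
proof -
  have "(\<integral>\<^sup>+z. f z \<partial>lborel) = (\<integral>\<^sup>+p. f (Complex (fst p) (snd p)) \<partial>(lborel \<Otimes>\<^sub>M lborel))"
    by (subst lborel_complex) (simp add: nn_integral_distr)
  also have "\<dots> = (\<integral>\<^sup>+y. \<integral>\<^sup>+x. f (Complex x y) \<partial>lborel \<partial>lborel)"
    by (subst lborel_pair.nn_integral_snd[symmetric]) auto
  finally show ?thesis .
qed

definition shx :: "real \<Rightarrow> complex \<Rightarrow> complex" where "shx a z = Complex (Re z + a * Im z) (Im z)"
definition shy :: "real \<Rightarrow> complex \<Rightarrow> complex" where "shy a z = Complex (Re z) (Im z + a * Re z)"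

lemma shx_meas[measurable]: "shx a \<in> borel_measurable borel"
  unfolding shx_def Complex_eq by measurable
lemma shy_meas[measurable]: "shy a \<in> borel_measurable borel"
  unfolding shy_def Complex_eq by measurable

lemma nn_integral_shx:
  assumes [measurable]: "f \<in> borel_measurable (borel :: complex measure)"
  shows "(\<integral>\<^sup>+z. f (shx a z) \<partial>lborel) = (\<integral>\<^sup>+z. f z \<partial>lborel)"
proof -
  have "(\<integral>\<^sup>+z. f (shx a z) \<partial>lborel) = (\<integral>\<^sup>+y. \<integral>\<^sup>+x. f (Complex (x + a * y) y) \<partial>lborel \<partial>lborel)"
    using nn_integral_complex_yx[of "\<lambda>z. f (shx a z)"] by (simp add: shx_meas)(simp add: shx_def)
  also have "\<dots> = (\<integral>\<^sup>+y. \<integral>\<^sup>+x. f (Complex x y) \<partial>lborel \<partial>lborel)"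
  proof (rule nn_integral_cong)
    fix y :: real
    have m: "(\<lambda>x. f (Complex x y)) \<in> borel_measurable borel"
      unfolding Complex_eq by measurable
    show "(\<integral>\<^sup>+x. f (Complex (x + a * y) y) \<partial>lborel) = (\<integral>\<^sup>+x. f (Complex x y) \<partial>lborel)"
      using nn_integral_real_affine[OF m, of 1 "a*y"] by (simp add: add.commute)
  qed
  also have "\<dots> = (\<integral>\<^sup>+z. f z \<partial>lborel)"
    by (subst nn_integral_complex_yx) auto
  finally show ?thesis .
qed

lemma nn_integral_shy:
  assumes [measurable]: "f \<in> borel_measurable (borel :: complex measure)"
  shows "(\<integral>\<^sup>+z. f (shy a z) \<partial>lborel) = (\<integral>\<^sup>+z. f z \<partial>lborel)"
proof -
  have "(\<integral>\<^sup>+z. f (shy a z) \<partial>lborel) = (\<integral>\<^sup>+x. \<integral>\<^sup>+y. f (Complex x (y + a * x)) \<partial>lborel \<partial>lborel)"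
    using nn_integral_complex_xy[of "\<lambda>z. f (shy a z)"] by (simp add: shy_meas)(simp add: shy_def)
  also have "\<dots> = (\<integral>\<^sup>+x. \<integral>\<^sup>+y. f (Complex x y) \<partial>lborel \<partial>lborel)"
  proof (rule nn_integral_cong)
    fix x :: real
    have m: "(\<lambda>y. f (Complex x y)) \<in> borel_measurable borel"
      unfolding Complex_eq by measurable
    show "(\<integral>\<^sup>+y. f (Complex x (y + a * x)) \<partial>lborel) = (\<integral>\<^sup>+y. f (Complex x y) \<partial>lborel)"
      using nn_integral_real_affine[OF m, of 1 "a*x"] by (simp add: add.commute)
  qed
  also have "\<dots> = (\<integral>\<^sup>+z. f z \<partial>lborel)"
    by (subst nn_integral_complex_xy) auto
  finally show ?thesis .
qed

lemma rot_as_shears: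
  assumes "(Re w)^2 + (Im w)^2 = 1" "Re w \<noteq> -1"
  shows "w * z = shx (- (Im w / (1 + Re w))) (shy (Im w) (shx (- (Im w / (1 + Re w))) z))"
proof -
  define c where "c = Re w"
  define s where "s = Im w"
  have c1: "1 + c \<noteq> 0" using assms(2) by (simp add: c_def)
  have cs: "c^2 + s^2 = 1" using assms(1) by (simp add: c_def s_def)
  have "s * s = (1 - c) * (1 + c)" using cs by (simp add: power2_eq_square algebra_simps)
  hence e1: "1 - s * (s / (1 + c)) = c"
    using c1 by (simp add: field_simps)
  have k: "s * s * s - 2 * s * (1 + c) = - s * (1 + c)^2"
  proof -
    have "s * s * s - 2 * s * (1 + c) + s * (1 + c)^2 = s * (c^2 + s^2 - 1)" by (simp add: algebra_simps power2_eq_square)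
    thus ?thesis using cs by simp
  qed
  have e2: "- (s / (1 + c)) - s / (1 + c) + s * (s / (1 + c)) * (s / (1 + c)) = - s"
  proof -
    have "\<And>d. d \<noteq> 0 \<Longrightarrow> d^2 * (- (s / d) - s / d + s * (s / d) * (s / d)) = s * s * s - 2 * s * d"
      by (simp add: power2_eq_square field_simps)
    hence "(1 + c)^2 * (- (s / (1 + c)) - s / (1 + c) + s * (s / (1 + c)) * (s / (1 + c))) = s * s * s - 2 * s * (1 + c)"
      using c1 by blast
    also have "\<dots> = (1 + c)^2 * (- s)" using k by simp
    finally have "(1 + c)^2 * (- (s / (1 + c)) - s / (1 + c) + s * (s / (1 + c)) * (s / (1 + c))) = (1 + c)^2 * (- s)" .
    thus ?thesis using c1 by (subst (asm) mult_left_cancel) auto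
  qed
  define t where "t = s / (1 + c)"
  have e1': "1 - s * t = c" using e1 by (simp add: t_def)
  have e2': "- t - t + s * t * t = - s" using e2 by (simp add: t_def)
  define x where "x = Re z"
  define y where "y = Im z"
  have r1: "(x + - t * y) + - t * (y + s * (x + - t * y)) = (1 - s * t) * x + (- t - t + s * t * t) * y"
    by (simp add: algebra_simps)
  have r2: "y + s * (x + - t * y) = s * x + (1 - s * t) * y"
    by (simp add: algebra_simps)
  have "w * z = Complex (c * x - s * y) (s * x + c * y)"
    by (simp add: complex_eq_iff c_def s_def x_def y_def)
  also have "\<dots> = shx (- t) (shy s (shx (- t) z))"
    unfolding shx_def shy_def using r1 r2 e1' e2'
    by (simp add: x_def[symmetric] y_def[symmetric])
  finally show ?thesis by (simp add: t_def c_def s_def)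
qed

lemma nn_integral_rot_aux:
  assumes [measurable]: "f \<in> borel_measurable (borel :: complex measure)"
    and "norm w = 1" "Re w \<noteq> -1"
  shows "(\<integral>\<^sup>+z. f (w * z) \<partial>lborel) = (\<integral>\<^sup>+z. f z \<partial>lborel)"
proof -
  have n: "(Re w)^2 + (Im w)^2 = 1" using assms(2) by (simp add: cmod_def)
  define t where "t = - (Im w / (1 + Re w))"
  have "(\<integral>\<^sup>+z. f (w * z) \<partial>lborel) = (\<integral>\<^sup>+z. (\<lambda>u. f (shx t (shy (Im w) u))) (shx t z) \<partial>lborel)"
    using rot_as_shears[OF n assms(3)] by (simp add: t_def)
  also have "\<dots> = (\<integral>\<^sup>+z. (\<lambda>u. f (shx t u)) (shy (Im w) z) \<partial>lborel)"
    by (rule nn_integral_shx) measurable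
  also have "\<dots> = (\<integral>\<^sup>+z. f (shx t z) \<partial>lborel)"
    by (rule nn_integral_shy) measurable
  also have "\<dots> = (\<integral>\<^sup>+z. f z \<partial>lborel)"
    by (rule nn_integral_shx) measurable
  finally show ?thesis .
qed

lemma nn_integral_rot:
  assumes [measurable]: "f \<in> borel_measurable (borel :: complex measure)"
    and "norm w = 1"
  shows "(\<integral>\<^sup>+z. f (w * z) \<partial>lborel) = (\<integral>\<^sup>+z. f z \<partial>lborel)"
proof (cases "Re w = -1")
  case False
  then show ?thesis using nn_integral_rot_aux assms by blast
next
  case True
  have "Im w = 0" using True assms(2) by (simp add: cmod_def)
  hence w: "w = \<i> * \<i>" using True by (simp add: complex_eq_iff)
  have "(\<integral>\<^sup>+z. f (w * z) \<partial>lborel) = (\<integral>\<^sup>+z. (\<lambda>u. f (\<i> * u)) (\<i> * z) \<partial>lborel)"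
    by (simp add: w mult.assoc)
  also have "\<dots> = (\<integral>\<^sup>+z. f (\<i> * z) \<partial>lborel)"
    by (rule nn_integral_rot_aux) auto
  also have "\<dots> = (\<integral>\<^sup>+z. f z \<partial>lborel)"
    by (rule nn_integral_rot_aux) auto
  finally show ?thesis .
qed

lemma distr_rot:
  assumes "norm w = (1::real)"
  shows "distr lborel borel (\<lambda>z::complex. w * z) = lborel"
proof (rule measure_eqI)
  fix A assume A: "A \<in> sets (distr lborel borel (\<lambda>z::complex. w * z))"
  hence [measurable]: "A \<in> sets borel" by simp
  have "emeasure (distr lborel borel (\<lambda>z::complex. w * z)) A = (\<integral>\<^sup>+z. indicator A z \<partial>distr lborel borel (\<lambda>z::complex. w * z))"
    by (simp add: nn_integral_indicator)
  also have "\<dots> = (\<integral>\<^sup>+z. indicator A (w * z) \<partial>lborel)"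
    by (subst nn_integral_distr) auto
  also have "\<dots> = (\<integral>\<^sup>+z. indicator A z \<partial>lborel)"
    by (rule nn_integral_rot) (auto simp: assms)
  also have "\<dots> = emeasure lborel A" by (simp add: nn_integral_indicator)
  finally show "emeasure (distr lborel borel (\<lambda>z::complex. w * z)) A = emeasure lborel A" .
qed simp



definition rho :: "nat \<Rightarrow> real" where "rho k = 1 - (1/2)^k"

definition ann :: "nat \<Rightarrow> complex set" where "ann k = ball 0 (rho (Suc k)) - ball 0 (rho k)"

lemma rho_nonneg: "0 \<le> rho k" unfolding rho_def by (simp add: power_le_one)
lemma rho_less1: "rho k < 1" unfolding rho_def by simp
lemma rho_mono: "rho k \<le> rho (Suc k)" unfolding rho_def by simp

lemma emeasure_ball_complex: "r \<ge> 0 \<Longrightarrow> emeasure lborel (ball (0::complex) r) = ennreal (pi * r^2)"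
  by (simp add: emeasure_ball unit_ball_vol_2)

lemma emeasure_ann: "emeasure lborel (ann k) \<le> ennreal (pi * (1/2)^k)"
proof -
  have sub: "ball (0::complex) (rho k) \<subseteq> ball 0 (rho (Suc k))" using rho_mono[of k] by auto
  have "emeasure lborel (ann k) = emeasure lborel (ball (0::complex) (rho (Suc k))) - emeasure lborel (ball (0::complex) (rho k))"
    unfolding ann_def using sub emeasure_lborel_ball_finite[of "0::complex"]
    by (intro emeasure_Diff) (auto simp: less_top)
  also have "\<dots> = ennreal (pi * (rho (Suc k))^2) - ennreal (pi * (rho k)^2)"
    using rho_nonneg by (simp add: emeasure_ball_complex)
  also have "\<dots> = ennreal (pi * (rho (Suc k))^2 - pi * (rho k)^2)"
    using rho_nonneg by (subst ennreal_minus) auto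
  also have "\<dots> \<le> ennreal (pi * (1/2)^k)"
  proof (rule ennreal_leI)
    have "(rho (Suc k))^2 - (rho k)^2 = (rho (Suc k) - rho k) * (rho (Suc k) + rho k)"
      by (simp add: power2_eq_square algebra_simps)
    also have "\<dots> \<le> (rho (Suc k) - rho k) * 2"
      using rho_less1[of k] rho_less1[of "Suc k"] rho_mono[of k]
      by (intro mult_left_mono) auto
    also have "\<dots> = (1/2)^k" by (simp add: rho_def)
    finally have "(rho (Suc k))^2 - (rho k)^2 \<le> (1/2)^k" .
    hence "pi * ((rho (Suc k))^2 - (rho k)^2) \<le> pi * (1/2)^k"
      by (intro mult_left_mono) auto
    thus "pi * (rho (Suc k))^2 - pi * (rho k)^2 \<le> pi * (1/2)^k"
      by (simp add: algebra_simps)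
  qed
  finally show ?thesis .
qed

lemma in_some_ann:
  assumes "norm (z::complex) < 1"
  shows "\<exists>k. z \<in> ann k"
proof -
  have "\<exists>m. norm z < rho (Suc m)"
  proof -
    obtain m where "(1/2::real)^m < 1 - norm z"
      using real_arch_pow_inv[of "1 - norm z" "1/2"] assms by auto
    hence "norm z < rho m" by (simp add: rho_def)
    moreover have "rho m \<le> rho (Suc m)" by (rule rho_mono)
    ultimately show ?thesis using less_le_trans by blast
  qed
  define k where "k = (LEAST m. norm z < rho (Suc m))"
  have k1: "norm z < rho (Suc k)"
    unfolding k_def by (rule LeastI_ex) fact
  have k2: "rho k \<le> norm z"
  proof (cases k)
    case 0 then show ?thesis by (simp add: rho_def)
  next
    case (Suc m)
    hence "m < k" by simp
    hence "\<not> norm z < rho (Suc m)" unfolding k_def by (rule not_less_Least)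
    then show ?thesis using Suc by simp
  qed
  show ?thesis using k1 k2 by (auto simp: ann_def)
qed

lemma weight_bound_ann:
  fixes \<alpha> :: real
  assumes "z \<in> ann k"
  shows "(1 - (cmod z)^2) powr \<alpha> \<le> (2 powr (max 0 (- \<alpha>)))^(Suc k)"
proof -
  have z1: "norm z < rho (Suc k)" "rho k \<le> norm z" using assms by (auto simp: ann_def)
  hence zl1: "norm z < 1" using rho_less1[of "Suc k"] by simp
  have low: "(1/2)^(Suc k) \<le> 1 - (cmod z)^2"
  proof -
    have "(1/2)^(Suc k) = 1 - rho (Suc k)" by (simp add: rho_def)
    also have "\<dots> \<le> 1 - norm z" using z1 by simp
    also have "\<dots> \<le> 1 - (cmod z)^2"
      using zl1 mult_left_le[of "cmod z" "cmod z"] by (simp add: power2_eq_square)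
    finally show ?thesis .
  qed
  have up: "1 - (cmod z)^2 \<le> 1" by simp
  have pos: "0 < (1/2::real)^(Suc k)" by simp
  show ?thesis
  proof (cases "\<alpha> \<ge> 0")
    case True
    have "(1 - (cmod z)^2) powr \<alpha> \<le> 1"
      using True up by (intro powr_le1) (use low pos in linarith)+
    then show ?thesis using True by simp
  next
    case False
    have "(1 - (cmod z)^2) powr \<alpha> \<le> ((1/2)^(Suc k)) powr \<alpha>"
      using False low pos by (intro powr_mono2') auto
    also have "\<dots> = (2 powr (- \<alpha>))^(Suc k)"
      by (simp add: powr_realpow[symmetric] powr_powr powr_minus_divide powr_divide powr_mult mult.commute
                    flip: powr_realpow)
    finally show ?thesis using False by simp
  qed
qed

lemma cont_pw: "continuous_on (ball 0 1) (\<lambda>z::complex. (1 - (cmod z)^2) powr \<alpha>)"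
proof -
  have "\<And>z::complex. z \<in> ball 0 1 \<Longrightarrow> 0 < 1 - (cmod z)^2"
    by (simp add: abs_square_less_1)
  thus ?thesis by (intro continuous_intros) force+
qed

lemma sum_sing: "(\<Sum>i\<in>{k::nat}. h i) = (h k :: ennreal)" by simp

lemma pw_integrable:
  fixes \<alpha> :: real
  assumes "\<alpha> > -1"
  shows "set_integrable lborel (ball (0::complex) 1) (\<lambda>z. (1 - (cmod z)^2) powr \<alpha>)"
proof -
  define Q where "Q = 2 powr (max 0 (- \<alpha>))"
  have Q0: "0 < Q" by (simp add: Q_def)
  have Q2: "Q < 2"
  proof -
    have "Q < 2 powr 1" unfolding Q_def using assms by (intro powr_less_mono) auto
    thus ?thesis by simp
  qed
  define g where "g = (\<lambda>z::complex. indicator (ball 0 1) z *\<^sub>R (1 - (cmod z)^2) powr \<alpha>)"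
  have gm: "g \<in> borel_measurable lborel"
    unfolding g_def using borel_measurable_continuous_on_indicator[OF _ cont_pw[of \<alpha>]]
    by simp
  have ann_meas: "ann k \<in> sets lborel" for k unfolding ann_def by simp
  have pt: "ennreal (g z) \<le> (\<Sum>k. ennreal (Q^Suc k) * indicator (ann k) z)" for z
  proof (cases "z \<in> ball 0 1")
    case False then show ?thesis by (simp add: g_def)
  next
    case True
    then obtain k where k: "z \<in> ann k" using in_some_ann by auto
    have "ennreal (g z) \<le> ennreal (Q^Suc k) * indicator (ann k) z"
      using True k weight_bound_ann[OF k, of \<alpha>] by (simp add: g_def Q_def)
    also have "\<dots> = (\<Sum>i\<in>{k}. ennreal (Q^Suc i) * indicator (ann i) z)" 
      using sum_sing[of "\<lambda>i. ennreal (Q^Suc i) * indicator (ann i) z"] by (simp only:)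
    also have "\<dots> \<le> (\<Sum>i. ennreal (Q^Suc i) * indicator (ann i) z)"
      by (rule sum_le_suminf) auto
    finally show ?thesis .
  qed
  have summ: "summable (\<lambda>k. Q^Suc k * (pi * (1/2)^k))"
  proof -
    have "(\<lambda>k. Q^Suc k * (pi * (1/2)^k)) = (\<lambda>k. (Q * pi) * (Q/2)^k)"
      by (simp add: power_divide field_simps)
    moreover have "summable (\<lambda>k. (Q * pi) * (Q/2)^k)"
      using Q0 Q2 by (intro summable_mult summable_geometric) auto
    ultimately show ?thesis by simp
  qed
  have "(\<integral>\<^sup>+z. ennreal (g z) \<partial>lborel) \<le> (\<integral>\<^sup>+z. (\<Sum>k. ennreal (Q^Suc k) * indicator (ann k) z) \<partial>lborel)"
    by (intro nn_integral_mono pt)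
  also have "\<dots> = (\<Sum>k. \<integral>\<^sup>+z. ennreal (Q^Suc k) * indicator (ann k) z \<partial>lborel)"
    by (rule nn_integral_suminf) (use ann_meas in auto)
  also have "\<dots> = (\<Sum>k. ennreal (Q^Suc k) * emeasure lborel (ann k))"
    using ann_meas by (simp add: nn_integral_cmult_indicator)
  also have "\<dots> \<le> (\<Sum>k. ennreal (Q^Suc k * (pi * (1/2)^k)))"
  proof (intro suminf_le)
    fix k
    have "ennreal (Q^Suc k) * emeasure lborel (ann k) \<le> ennreal (Q^Suc k) * ennreal (pi * (1/2)^k)"
      by (intro mult_left_mono emeasure_ann) auto
    thus "ennreal (Q^Suc k) * emeasure lborel (ann k) \<le> ennreal (Q^Suc k * (pi * (1/2)^k))"
      using Q0 by (simp add: ennreal_mult)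
  qed auto
  also have "\<dots> = ennreal (\<Sum>k. Q^Suc k * (pi * (1/2)^k))"
    using summ Q0 by (intro suminf_ennreal2) auto
  also have "\<dots> < \<infinity>" by simp
  finally have fin: "(\<integral>\<^sup>+z. ennreal (g z) \<partial>lborel) < \<infinity>" .
  have "integrable lborel g"
    using gm fin by (intro integrableI_nonneg) (auto simp: g_def)
  thus ?thesis unfolding set_integrable_def g_def .
qed



abbreviation "D \<equiv> ball (0::complex) 1"

lemma D_sets[simp]: "D \<in> sets lborel" by simp

lemma w_pos: "\<alpha> > -1 \<Longrightarrow> z \<in> D \<Longrightarrow> 0 < bergman_weight \<alpha> z"
proof -
  assume a: "\<alpha> > -1" "z \<in> D"
  hence "0 < 1 - (cmod z)^2" by (simp add: abs_square_less_1)
  hence "0 < (1 - (cmod z)^2) powr \<alpha>" by simp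
  thus ?thesis unfolding bergman_weight_def using a by simp
qed

lemma w_nonneg: "\<alpha> > -1 \<Longrightarrow> z \<in> D \<Longrightarrow> 0 \<le> bergman_weight \<alpha> z"
  using w_pos[of \<alpha> z] by simp

lemma w_cont: "continuous_on D (bergman_weight \<alpha>)"
  unfolding bergman_weight_def by (intro continuous_on_mult_left cont_pw)

lemma w_int: "\<alpha> > -1 \<Longrightarrow> set_integrable lborel D (bergman_weight \<alpha>)"
  unfolding bergman_weight_def using pw_integrable[of \<alpha>]
  by (intro set_integrable_mult_right) auto

lemma w_rot: "norm u = 1 \<Longrightarrow> bergman_weight \<alpha> (u * z) = bergman_weight \<alpha> z"
  unfolding bergman_weight_def by (simp add: norm_mult)

lemma meas_cont:
  fixes h :: "complex \<Rightarrow> 'b::real_normed_vector"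
  shows "continuous_on D h \<Longrightarrow> (\<lambda>z. indicator D z *\<^sub>R h z) \<in> borel_measurable lborel"
  using borel_measurable_continuous_on_indicator[of D h] by simp

lemma sp_hol: "f \<in> bergman_space \<alpha> \<Longrightarrow> f holomorphic_on D"
  unfolding bergman_space_def by simp

lemma sp_cont: "f \<in> bergman_space \<alpha> \<Longrightarrow> continuous_on D f"
  using sp_hol holomorphic_on_imp_continuous_on by blast

lemma sp_int: "f \<in> bergman_space \<alpha> \<Longrightarrow> set_integrable lborel D (\<lambda>z. bergman_weight \<alpha> z * (cmod (f z))\<^sup>2)"
  unfolding bergman_space_def by simp

lemma sp_intro: "f holomorphic_on D \<Longrightarrow> set_integrable lborel D (\<lambda>z. bergman_weight \<alpha> z * (cmod (f z))\<^sup>2) \<Longrightarrow> f \<in> bergman_space \<alpha>"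
  unfolding bergman_space_def by simp




lemma ab_le: "(a::real) \<ge> 0 \<Longrightarrow> b \<ge> 0 \<Longrightarrow> a * b \<le> a\<^sup>2 + b\<^sup>2"
proof -
  assume "a \<ge> 0" "b \<ge> 0"
  hence "0 \<le> a * b" by simp
  moreover have "0 \<le> (a - b)^2" by simp
  ultimately show ?thesis unfolding power2_eq_square by (simp add: algebra_simps)
qed

lemma ip_int:
  assumes a: "\<alpha> > -1" and f: "f \<in> bergman_space \<alpha>" and g: "g \<in> bergman_space \<alpha>"
  shows "set_integrable lborel D (\<lambda>z. complex_of_real (bergman_weight \<alpha> z) * f z * cnj (g z))"
  unfolding set_integrable_def
proof (rule Bochner_Integration.integrable_bound)
  show "integrable lborel (\<lambda>z. indicator D z *\<^sub>R (bergman_weight \<alpha> z * (cmod (f z))\<^sup>2) + indicator D z *\<^sub>R (bergman_weight \<alpha> z * (cmod (g z))\<^sup>2))"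
    using sp_int[OF f] sp_int[OF g] unfolding set_integrable_def
    by (rule Bochner_Integration.integrable_add)
  show "(\<lambda>z. indicator D z *\<^sub>R (complex_of_real (bergman_weight \<alpha> z) * f z * cnj (g z))) \<in> borel_measurable lborel"
    using sp_cont[OF f] sp_cont[OF g] w_cont[of \<alpha>]
    by (intro meas_cont continuous_intros) auto
  show "AE z in lborel. norm (indicator D z *\<^sub>R (complex_of_real (bergman_weight \<alpha> z) * f z * cnj (g z)))
      \<le> norm (indicator D z *\<^sub>R (bergman_weight \<alpha> z * (cmod (f z))\<^sup>2) + indicator D z *\<^sub>R (bergman_weight \<alpha> z * (cmod (g z))\<^sup>2))"
  proof (rule AE_I2)
    fix z
    show "norm (indicator D z *\<^sub>R (complex_of_real (bergman_weight \<alpha> z) * f z * cnj (g z)))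
      \<le> norm (indicator D z *\<^sub>R (bergman_weight \<alpha> z * (cmod (f z))\<^sup>2) + indicator D z *\<^sub>R (bergman_weight \<alpha> z * (cmod (g z))\<^sup>2))"
    proof (cases "z \<in> D")
      case True
      have w0: "0 \<le> bergman_weight \<alpha> z" using w_nonneg[OF a True] .
      have "bergman_weight \<alpha> z * (cmod (f z) * cmod (g z)) \<le> bergman_weight \<alpha> z * ((cmod (f z))\<^sup>2 + (cmod (g z))\<^sup>2)"
        using w0 ab_le[of "cmod (f z)" "cmod (g z)"] by (intro mult_left_mono) auto
      moreover have "norm (indicator D z *\<^sub>R (complex_of_real (bergman_weight \<alpha> z) * f z * cnj (g z)))
           = bergman_weight \<alpha> z * (cmod (f z) * cmod (g z))"
        using True w0 by (simp add: norm_mult)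
      moreover have "norm (indicator D z *\<^sub>R (bergman_weight \<alpha> z * (cmod (f z))\<^sup>2) + indicator D z *\<^sub>R (bergman_weight \<alpha> z * (cmod (g z))\<^sup>2))
           = bergman_weight \<alpha> z * ((cmod (f z))\<^sup>2 + (cmod (g z))\<^sup>2)"
        using True w0 by (simp add: distrib_left)
      ultimately show ?thesis by simp
    qed simp
  qed
qed



lemma two_ab_le: "2 * ((a::real) * b) \<le> a\<^sup>2 + b\<^sup>2"
proof -
  have "0 \<le> (a - b)^2" by simp
  thus ?thesis unfolding power2_eq_square by (simp add: algebra_simps)
qed

lemma sp_intro_bound:
  assumes a: "\<alpha> > -1" and h: "h holomorphic_on D"
    and G: "set_integrable lborel D G"
    and bd: "\<And>z. z \<in> D \<Longrightarrow> bergman_weight \<alpha> z * (cmod (h z))\<^sup>2 \<le> G z"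
  shows "h \<in> bergman_space \<alpha>"
proof (rule sp_intro[OF h])
  show "set_integrable lborel D (\<lambda>z. bergman_weight \<alpha> z * (cmod (h z))\<^sup>2)"
    unfolding set_integrable_def
  proof (rule Bochner_Integration.integrable_bound)
    show "integrable lborel (\<lambda>z. indicator D z *\<^sub>R G z)" using G unfolding set_integrable_def .
    show "(\<lambda>z. indicator D z *\<^sub>R (bergman_weight \<alpha> z * (cmod (h z))\<^sup>2)) \<in> borel_measurable lborel"
      using holomorphic_on_imp_continuous_on[OF h] w_cont[of \<alpha>]
      by (intro meas_cont continuous_intros) auto
    show "AE z in lborel. norm (indicator D z *\<^sub>R (bergman_weight \<alpha> z * (cmod (h z))\<^sup>2)) \<le> norm (indicator D z *\<^sub>R G z)"
    proof (rule AE_I2)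
      fix z show "norm (indicator D z *\<^sub>R (bergman_weight \<alpha> z * (cmod (h z))\<^sup>2)) \<le> norm (indicator D z *\<^sub>R G z)"
      proof (cases "z \<in> D")
        case True
        have "0 \<le> bergman_weight \<alpha> z * (cmod (h z))\<^sup>2" using w_nonneg[OF a True] by simp
        then show ?thesis using True bd[OF True] by simp
      qed simp
    qed
  qed
qed

lemma sp_zero: "\<alpha> > -1 \<Longrightarrow> (\<lambda>z. 0) \<in> bergman_space \<alpha>"
  by (rule sp_intro) (auto simp: set_integrable_def)

lemma sp_add:
  assumes a: "\<alpha> > -1" and f: "f \<in> bergman_space \<alpha>" and g: "g \<in> bergman_space \<alpha>"
  shows "(\<lambda>z. f z + g z) \<in> bergman_space \<alpha>"
proof (rule sp_intro_bound[OF a])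
  show "(\<lambda>z. f z + g z) holomorphic_on D" using sp_hol[OF f] sp_hol[OF g] by (intro holomorphic_intros)
  show "set_integrable lborel D (\<lambda>z. 2 * (bergman_weight \<alpha> z * (cmod (f z))\<^sup>2) + 2 * (bergman_weight \<alpha> z * (cmod (g z))\<^sup>2))"
    using sp_int[OF f] sp_int[OF g] by (intro set_integral_add set_integrable_mult_right) auto
  fix z assume z: "z \<in> D"
  have w0: "0 \<le> bergman_weight \<alpha> z" using w_nonneg[OF a z] .
  have "(cmod (f z + g z))\<^sup>2 \<le> (cmod (f z) + cmod (g z))\<^sup>2"
    by (intro power_mono norm_triangle_ineq) auto
  also have "\<dots> \<le> 2 * (cmod (f z))\<^sup>2 + 2 * (cmod (g z))\<^sup>2"
    using two_ab_le[of "cmod (f z)" "cmod (g z)"] by (simp add: power2_eq_square algebra_simps)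
  finally have "bergman_weight \<alpha> z * (cmod (f z + g z))\<^sup>2 \<le> bergman_weight \<alpha> z * (2 * (cmod (f z))\<^sup>2 + 2 * (cmod (g z))\<^sup>2)"
    using w0 by (intro mult_left_mono)
  thus "bergman_weight \<alpha> z * (cmod (f z + g z))\<^sup>2 \<le> 2 * (bergman_weight \<alpha> z * (cmod (f z))\<^sup>2) + 2 * (bergman_weight \<alpha> z * (cmod (g z))\<^sup>2)"
    by (simp add: algebra_simps)
qed

lemma sp_cmult:
  assumes a: "\<alpha> > -1" and f: "f \<in> bergman_space \<alpha>"
  shows "(\<lambda>z. c * f z) \<in> bergman_space \<alpha>"
proof (rule sp_intro_bound[OF a])
  show "(\<lambda>z. c * f z) holomorphic_on D" using sp_hol[OF f] by (intro holomorphic_intros)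
  show "set_integrable lborel D (\<lambda>z. (cmod c)\<^sup>2 * (bergman_weight \<alpha> z * (cmod (f z))\<^sup>2))"
    using sp_int[OF f] by (intro set_integrable_mult_right) auto
  fix z show "bergman_weight \<alpha> z * (cmod (c * f z))\<^sup>2 \<le> (cmod c)\<^sup>2 * (bergman_weight \<alpha> z * (cmod (f z))\<^sup>2)"
    by (simp add: norm_mult power_mult_distrib)
qed

lemma sp_sum:
  assumes a: "\<alpha> > -1" and "finite J" and g: "\<And>j. j \<in> J \<Longrightarrow> g j \<in> bergman_space \<alpha>"
  shows "(\<lambda>z. \<Sum>j\<in>J. g j z) \<in> bergman_space \<alpha>"
  using assms(2,3)
proof (induction J rule: finite_induct)
  case empty then show ?case using sp_zero[OF a] by simp
next
  case (insert x F)
  then show ?case using sp_add[OF a, of "g x" "\<lambda>z. \<Sum>j\<in>F. g j z"] by simp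
qed

lemma sp_pow:
  assumes a: "\<alpha> > -1"
  shows "(\<lambda>z. z ^ j) \<in> bergman_space \<alpha>"
proof (rule sp_intro_bound[OF a])
  show "(\<lambda>z. z ^ j) holomorphic_on D" by (intro holomorphic_intros)
  show "set_integrable lborel D (bergman_weight \<alpha>)" using w_int[OF a] .
  fix z assume z: "z \<in> D"
  have "(cmod (z ^ j))\<^sup>2 \<le> 1" using z by (simp add: norm_power power_le_one less_imp_le)
  thus "bergman_weight \<alpha> z * (cmod (z ^ j))\<^sup>2 \<le> bergman_weight \<alpha> z"
    using w_nonneg[OF a z] mult_left_le by blast
qed

lemma rot_D: "norm u = 1 \<Longrightarrow> (u * z \<in> D) = (z \<in> D)"
  by (simp add: norm_mult)

lemma distr_rot_int:
  fixes H :: "complex \<Rightarrow> 'b::{banach, second_countable_topology}"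
  assumes u: "norm u = 1" and H: "H \<in> borel_measurable lborel"
  shows "integral\<^sup>L lborel (\<lambda>z. H (u * z)) = integral\<^sup>L lborel H"
    and "integrable lborel (\<lambda>z. H (u * z)) = integrable lborel H"
proof -
  have m: "(\<lambda>z. u * z) \<in> measurable lborel borel" by simp
  have H': "H \<in> borel_measurable borel" using H by simp
  show "integral\<^sup>L lborel (\<lambda>z. H (u * z)) = integral\<^sup>L lborel H"
    using integral_distr[OF m H'] distr_rot[OF u] by simp
  show "integrable lborel (\<lambda>z. H (u * z)) = integrable lborel H"
    using integrable_distr_eq[OF m H'] distr_rot[OF u] by simp
qed

lemma sp_rot:
  assumes a: "\<alpha> > -1" and f: "f \<in> bergman_space \<alpha>" and u: "norm u = 1"
  shows "(\<lambda>z. f (u * z)) \<in> bergman_space \<alpha>"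
proof (rule sp_intro)
  have "(\<lambda>z. u * z) ` D \<subseteq> D" using u by (auto simp: norm_mult)
  thus "(\<lambda>z. f (u * z)) holomorphic_on D"
    using holomorphic_on_compose_gen[of "\<lambda>z. u * z" D f D] sp_hol[OF f]
    by (auto simp: o_def intro: holomorphic_intros)
  define H where "H = (\<lambda>z. indicator D z *\<^sub>R (bergman_weight \<alpha> z * (cmod (f z))\<^sup>2))"
  have Hm: "H \<in> borel_measurable lborel"
    unfolding H_def using sp_cont[OF f] w_cont[of \<alpha>] by (intro meas_cont continuous_intros) auto
  have "integrable lborel H" using sp_int[OF f] unfolding H_def set_integrable_def .
  hence "integrable lborel (\<lambda>z. H (u * z))" using distr_rot_int(2)[OF u Hm] by simp
  moreover have "(\<lambda>z. H (u * z)) = (\<lambda>z. indicator D z *\<^sub>R (bergman_weight \<alpha> z * (cmod (f (u * z)))\<^sup>2))"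
    unfolding H_def using u by (auto simp: w_rot norm_mult indicator_def)
  ultimately show "set_integrable lborel D (\<lambda>z. bergman_weight \<alpha> z * (cmod (f (u * z)))\<^sup>2)"
    unfolding set_integrable_def by simp
qed



lemma ip_cong:
  assumes "\<And>z. z \<in> D \<Longrightarrow> f z = f' z" "\<And>z. z \<in> D \<Longrightarrow> g z = g' z"
  shows "bergman_inner \<alpha> f g = bergman_inner \<alpha> f' g'"
  unfolding bergman_inner_def using assms by (intro set_lebesgue_integral_cong) auto

lemma ip_scale:
  "bergman_inner \<alpha> (\<lambda>z. a * f z) (\<lambda>z. b * g z) = a * cnj b * bergman_inner \<alpha> f g"
proof -
  have "bergman_inner \<alpha> (\<lambda>z. a * f z) (\<lambda>z. b * g z) = (LINT z:D|lborel. (a * cnj b) * (complex_of_real (bergman_weight \<alpha> z) * f z * cnj (g z)))"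
    unfolding bergman_inner_def by (simp add: mult_ac)
  also have "\<dots> = a * cnj b * bergman_inner \<alpha> f g"
    unfolding bergman_inner_def by (rule set_integral_mult_right)
  finally show ?thesis .
qed

lemma ip_rot:
  assumes a: "\<alpha> > -1" and f: "f \<in> bergman_space \<alpha>" and g: "g \<in> bergman_space \<alpha>" and u: "norm u = 1"
  shows "bergman_inner \<alpha> (\<lambda>z. f (u * z)) (\<lambda>z. g (u * z)) = bergman_inner \<alpha> f g"
proof -
  define H where "H = (\<lambda>z. indicator D z *\<^sub>R (complex_of_real (bergman_weight \<alpha> z) * f z * cnj (g z)))"
  have Hm: "H \<in> borel_measurable lborel"
    unfolding H_def using sp_cont[OF f] sp_cont[OF g] w_cont[of \<alpha>] by (intro meas_cont continuous_intros) auto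
  have "(\<lambda>z. H (u * z)) = (\<lambda>z. indicator D z *\<^sub>R (complex_of_real (bergman_weight \<alpha> z) * f (u * z) * cnj (g (u * z))))"
    unfolding H_def using u by (auto simp: w_rot norm_mult indicator_def)
  hence "bergman_inner \<alpha> (\<lambda>z. f (u * z)) (\<lambda>z. g (u * z)) = integral\<^sup>L lborel (\<lambda>z. H (u * z))"
    unfolding bergman_inner_def set_lebesgue_integral_def by simp
  also have "\<dots> = integral\<^sup>L lborel H" by (rule distr_rot_int(1)[OF u Hm])
  also have "\<dots> = bergman_inner \<alpha> f g" unfolding H_def bergman_inner_def set_lebesgue_integral_def ..
  finally show ?thesis .
qed

lemma ip_self:
  "bergman_inner \<alpha> f f = complex_of_real (LINT z:D|lborel. bergman_weight \<alpha> z * (cmod (f z))\<^sup>2)"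
proof -
  have eqf: "\<And>z. complex_of_real (bergman_weight \<alpha> z) * f z * cnj (f z) = complex_of_real (bergman_weight \<alpha> z * (cmod (f z))\<^sup>2)"
  proof -
    fix z
    have "f z * cnj (f z) = complex_of_real ((cmod (f z))^2)" by (rule complex_norm_square[symmetric])
    thus "complex_of_real (bergman_weight \<alpha> z) * f z * cnj (f z) = complex_of_real (bergman_weight \<alpha> z * (cmod (f z))\<^sup>2)"
      by (simp only: mult.assoc of_real_mult)
  qed
  have "bergman_inner \<alpha> f f = (LINT z:D|lborel. complex_of_real (bergman_weight \<alpha> z * (cmod (f z))\<^sup>2))"
    unfolding bergman_inner_def by (simp only: eqf)
  also have "\<dots> = complex_of_real (LINT z:D|lborel. bergman_weight \<alpha> z * (cmod (f z))\<^sup>2)"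
    by (rule set_integral_complex_of_real)
  finally show ?thesis .
qed

lemma ip_sum:
  assumes a: "\<alpha> > -1" and J: "finite J" and M: "finite M"
    and g: "\<And>j. j \<in> J \<Longrightarrow> g j \<in> bergman_space \<alpha>" and h: "\<And>m. m \<in> M \<Longrightarrow> h m \<in> bergman_space \<alpha>"
  shows "bergman_inner \<alpha> (\<lambda>z. \<Sum>j\<in>J. c j * g j z) (\<lambda>z. \<Sum>m\<in>M. h m z) = (\<Sum>j\<in>J. \<Sum>m\<in>M. c j * bergman_inner \<alpha> (g j) (h m))"
proof -
  define I where "I = (\<lambda>j m z. indicator D z *\<^sub>R (complex_of_real (bergman_weight \<alpha> z) * g j z * cnj (h m z)))"
  have Iint: "j \<in> J \<Longrightarrow> m \<in> M \<Longrightarrow> integrable lborel (I j m)" for j m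
    using ip_int[OF a g h] unfolding I_def set_integrable_def by blast
  have eq: "indicator D z *\<^sub>R (complex_of_real (bergman_weight \<alpha> z) * (\<Sum>j\<in>J. c j * g j z) * cnj (\<Sum>m\<in>M. h m z))
      = (\<Sum>j\<in>J. \<Sum>m\<in>M. c j * I j m z)" for z
    unfolding I_def by (simp add: sum_distrib_left sum_distrib_right scaleR_sum_right cnj_sum mult_ac)
  have "bergman_inner \<alpha> (\<lambda>z. \<Sum>j\<in>J. c j * g j z) (\<lambda>z. \<Sum>m\<in>M. h m z) = integral\<^sup>L lborel (\<lambda>z. \<Sum>j\<in>J. \<Sum>m\<in>M. c j * I j m z)"
    unfolding bergman_inner_def set_lebesgue_integral_def eq ..
  also have "\<dots> = (\<Sum>j\<in>J. integral\<^sup>L lborel (\<lambda>z. \<Sum>m\<in>M. c j * I j m z))"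
    apply (rule Bochner_Integration.integral_sum)
    apply (rule Bochner_Integration.integrable_sum)
    apply (rule integrable_mult_right)
    using Iint by auto
  also have "\<dots> = (\<Sum>j\<in>J. \<Sum>m\<in>M. integral\<^sup>L lborel (\<lambda>z. c j * I j m z))"
    apply (rule sum.cong[OF refl])
    apply (rule Bochner_Integration.integral_sum)
    apply (rule integrable_mult_right)
    using Iint by auto
  also have "\<dots> = (\<Sum>j\<in>J. \<Sum>m\<in>M. c j * bergman_inner \<alpha> (g j) (h m))"
    by (simp only: integral_mult_right_zero) (simp add: I_def bergman_inner_def set_lebesgue_integral_def)
  finally show ?thesis .
qed

lemma orth:
  assumes a: "\<alpha> > -1" and f: "f \<in> bergman_space \<alpha>" and g: "g \<in> bergman_space \<alpha>" and u: "norm u = 1"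
    and fa: "\<And>z. z \<in> D \<Longrightarrow> f (u * z) = p * f z" and gb: "\<And>z. z \<in> D \<Longrightarrow> g (u * z) = q * g z"
    and q: "norm q = 1" and pq: "p \<noteq> q"
  shows "bergman_inner \<alpha> f g = 0"
proof -
  have "bergman_inner \<alpha> f g = bergman_inner \<alpha> (\<lambda>z. f (u * z)) (\<lambda>z. g (u * z))"
    using ip_rot[OF a f g u] by simp
  also have "\<dots> = bergman_inner \<alpha> (\<lambda>z. p * f z) (\<lambda>z. q * g z)"
    using fa gb by (intro ip_cong) auto
  also have "\<dots> = p * cnj q * bergman_inner \<alpha> f g" by (rule ip_scale)
  finally have e: "(1 - p * cnj q) * bergman_inner \<alpha> f g = 0" by (simp add: algebra_simps)
  have qq: "q * cnj q = 1" using q complex_norm_square[of q] by simp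
  have "p * cnj q \<noteq> 1"
  proof
    assume "p * cnj q = 1"
    hence "p * cnj q * q = q" by simp
    hence "p = q" using qq by (simp add: mult_ac)
    thus False using pq by simp
  qed
  thus ?thesis using e by simp
qed



definition om :: "nat \<Rightarrow> complex" where "om n = exp (2 * pi * \<i> / of_nat n)"

lemma om_norm: "norm (om n) = 1"
  unfolding om_def by (simp add: norm_exp_eq_Re)

lemma om_pow: "om n ^ k = exp (2 * pi * \<i> * of_nat k / of_nat n)"
  unfolding om_def exp_of_nat_mult[symmetric] by (simp add: field_simps)

lemma om_pow_n: "n \<ge> 1 \<Longrightarrow> om n ^ n = 1"
  unfolding om_pow by simp

lemma om_pow_ne1:
  assumes "0 < d" "d < n"
  shows "om n ^ d \<noteq> 1"
proof
  assume "om n ^ d = 1"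
  hence "exp (2 * pi * \<i> * of_nat d / of_nat n) = 1" by (simp add: om_pow)
  then obtain l :: int where l: "Im (2 * pi * \<i> * of_nat d / of_nat n) = of_int (2 * l) * pi"
    unfolding exp_eq_1 by blast
  have "Im (2 * pi * \<i> * of_nat d / of_nat n) = 2 * pi * (real d / real n)"
    by (simp add: Im_divide_of_real[of _ "real n", simplified])
  with l have "(2 * pi) * (real d / real n) = (2 * pi) * of_int l" by simp
  moreover have "2 * pi \<noteq> (0::real)" by simp
  ultimately have e: "real d / real n = of_int l" using mult_left_cancel by blast
  have "0 < real d / real n" "real d / real n < 1" using assms by auto
  with e have "0 < real_of_int l" "real_of_int l < 1" by simp_all
  hence "0 < l" "l < 1" by simp_all
  thus False by simp
qed

lemma om_pow_inj:
  assumes "j < n" "m < n" "j \<noteq> m"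
  shows "om n ^ j \<noteq> om n ^ m"
proof
  assume e: "om n ^ j = om n ^ m"
  have nz: "om n \<noteq> 0" using om_norm[of n] by auto
  have H: False if ab: "a < b" "b < n" "om n ^ a = om n ^ b" for a b
  proof -
    have "om n ^ b = om n ^ a * om n ^ (b - a)" using ab(1) by (simp flip: power_add)
    with ab(3) have "om n ^ (b - a) = 1" using nz by simp
    moreover have "0 < b - a" "b - a < n" using ab by auto
    ultimately show False using om_pow_ne1 by blast
  qed
  show False
  proof (cases "j < m")
    case True then show ?thesis using assms e H by blast
  next
    case False
    then have "m < j" using assms(3) by simp
    then show ?thesis using H[of m j] assms e by simp
  qed
qed

lemma decomp:
  assumes a: "\<alpha> > -1" and u: "norm u = 1"
    and inj: "\<And>j m. j < n \<Longrightarrow> m < n \<Longrightarrow> j \<noteq> m \<Longrightarrow> u ^ j \<noteq> u ^ m"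
    and g: "\<And>j. j < n \<Longrightarrow> g j \<in> bergman_space \<alpha>"
    and gu: "\<And>j z. j < n \<Longrightarrow> z \<in> D \<Longrightarrow> g j (u * z) = u ^ j * g j z"
  shows "bergman_inner \<alpha> (\<lambda>z. \<Sum>j<n. g j (u * z)) (\<lambda>z. \<Sum>j<n. g j z) = (\<Sum>j<n. u ^ j * bergman_inner \<alpha> (g j) (g j))"
    and "bergman_inner \<alpha> (\<lambda>z. \<Sum>j<n. g j z) (\<lambda>z. \<Sum>j<n. g j z) = (\<Sum>j<n. bergman_inner \<alpha> (g j) (g j))"
proof -
  have diag: "(\<Sum>m<n. c * bergman_inner \<alpha> (g j) (g m)) = c * bergman_inner \<alpha> (g j) (g j)" if j: "j < n" for j c
  proof -
    have "(\<Sum>m<n. c * bergman_inner \<alpha> (g j) (g m)) = (\<Sum>m<n. if m = j then c * bergman_inner \<alpha> (g j) (g j) else 0)"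
    proof (rule sum.cong[OF refl])
      fix m assume m: "m \<in> {..<n}"
      show "c * bergman_inner \<alpha> (g j) (g m) = (if m = j then c * bergman_inner \<alpha> (g j) (g j) else 0)"
      proof (cases "m = j")
        case False
        have "bergman_inner \<alpha> (g j) (g m) = 0"
          using m j False by (intro orth[OF a g g u gu gu]) (auto simp: norm_power u dest: inj)
        then show ?thesis using False by simp
      qed simp
    qed
    also have "\<dots> = c * bergman_inner \<alpha> (g j) (g j)" using j by simp
    finally show ?thesis .
  qed
  have "bergman_inner \<alpha> (\<lambda>z. \<Sum>j<n. g j (u * z)) (\<lambda>z. \<Sum>j<n. g j z) = bergman_inner \<alpha> (\<lambda>z. \<Sum>j<n. u ^ j * g j z) (\<lambda>z. \<Sum>j<n. g j z)"
    using gu by (intro ip_cong sum.cong) auto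
  also have "\<dots> = (\<Sum>j<n. \<Sum>m<n. u ^ j * bergman_inner \<alpha> (g j) (g m))"
    using g by (intro ip_sum[OF a]) auto
  also have "\<dots> = (\<Sum>j<n. u ^ j * bergman_inner \<alpha> (g j) (g j))"
    using diag by (intro sum.cong) auto
  finally show "bergman_inner \<alpha> (\<lambda>z. \<Sum>j<n. g j (u * z)) (\<lambda>z. \<Sum>j<n. g j z) = (\<Sum>j<n. u ^ j * bergman_inner \<alpha> (g j) (g j))" .
  have "bergman_inner \<alpha> (\<lambda>z. \<Sum>j<n. g j z) (\<lambda>z. \<Sum>j<n. g j z) = bergman_inner \<alpha> (\<lambda>z. \<Sum>j<n. 1 * g j z) (\<lambda>z. \<Sum>j<n. g j z)"
    by simp
  also have "\<dots> = (\<Sum>j<n. \<Sum>m<n. 1 * bergman_inner \<alpha> (g j) (g m))"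
    using g by (intro ip_sum[OF a]) auto
  also have "\<dots> = (\<Sum>j<n. 1 * bergman_inner \<alpha> (g j) (g j))"
    by (intro sum.cong refl diag) auto
  finally show "bergman_inner \<alpha> (\<lambda>z. \<Sum>j<n. g j z) (\<lambda>z. \<Sum>j<n. g j z) = (\<Sum>j<n. bergman_inner \<alpha> (g j) (g j))" by simp
qed



lemma periodic_sum:
  fixes h :: "nat \<Rightarrow> 'a::cancel_comm_monoid_add"
  assumes "h n = h 0"
  shows "(\<Sum>k<n. h (Suc k)) = (\<Sum>k<n. h k)"
proof -
  have "h 0 + (\<Sum>k<n. h (Suc k)) = (\<Sum>k<Suc n. h k)" by (rule sum.lessThan_Suc_shift[symmetric])
  also have "\<dots> = (\<Sum>k<n. h k) + h n" by simp
  finally show ?thesis using assms by (simp add: add.commute)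
qed

lemma lint_nonneg:
  assumes "\<alpha> > -1"
  shows "0 \<le> (LINT z:D|lborel. bergman_weight \<alpha> z * (cmod (f z))\<^sup>2)"
proof -
  have "\<And>x. x \<in> D \<Longrightarrow> 0 \<le> bergman_weight \<alpha> x * (cmod (f x))\<^sup>2"
    using w_nonneg[OF assms] by simp
  thus ?thesis unfolding set_lebesgue_integral_def
    by (intro Bochner_Integration.integral_nonneg) (simp add: indicator_def)
qed

lemma Mpos:
  assumes a: "\<alpha> > -1"
  shows "0 < (LINT z:D|lborel. bergman_weight \<alpha> z * (cmod (z ^ j))\<^sup>2)"
proof -
  define F where "F = (\<lambda>z. indicator D z *\<^sub>R (bergman_weight \<alpha> z * (cmod (z ^ j))\<^sup>2))"
  have Fi: "integrable lborel F" using sp_int[OF sp_pow[OF a]] unfolding F_def set_integrable_def .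
  have F0: "0 \<le> F z" for z unfolding F_def using w_nonneg[OF a] by (auto simp: indicator_def)
  have ge: "0 \<le> (LINT z:D|lborel. bergman_weight \<alpha> z * (cmod (z ^ j))\<^sup>2)" by (rule lint_nonneg[OF a])
  have "(LINT z:D|lborel. bergman_weight \<alpha> z * (cmod (z ^ j))\<^sup>2) \<noteq> 0"
  proof
    assume "(LINT z:D|lborel. bergman_weight \<alpha> z * (cmod (z ^ j))\<^sup>2) = 0"
    hence "integral\<^sup>L lborel F = 0" unfolding F_def set_lebesgue_integral_def .
    hence "AE z in lborel. F z = 0" using integral_nonneg_eq_0_iff_AE[OF Fi] F0 by simp
    moreover have "AE z in lborel. z \<noteq> (0::complex)" by (rule AE_lborel_singleton)
    ultimately have "AE z in lborel. \<not> (z \<in> D)"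
    proof eventually_elim
      case (elim z)
      show ?case
      proof
        assume z: "z \<in> D"
        have "0 < bergman_weight \<alpha> z" using w_pos[OF a z] .
        moreover have "0 < (cmod (z ^ j))\<^sup>2" using elim by simp
        ultimately have "0 < F z" using z unfolding F_def by simp
        thus False using elim by simp
      qed
    qed
    hence "emeasure lborel {z \<in> space lborel. z \<in> D} = 0" by (rule emeasure_eq_0_AE)
    moreover have "{z \<in> space lborel. z \<in> D} = D" by auto
    ultimately have "emeasure lborel D = 0" by (simp only:)
    moreover have "emeasure lborel D = ennreal (pi * 1^2)" by (rule emeasure_ball_complex) simp
    ultimately show False by simp
  qed
  with ge show ?thesis by simp
qed

lemma norm_one_iff:
  "bergman_norm \<alpha> f = 1 \<longleftrightarrow> (LINT z:D|lborel. bergman_weight \<alpha> z * (cmod (f z))\<^sup>2) = 1"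
  unfolding bergman_norm_def by simp



lemma uc_one: "norm u = 1 \<Longrightarrow> u * cnj u = 1"
  using complex_norm_square[of u] by simp

lemma hull_sub:
  assumes a: "\<alpha> > -1" and n: "n \<ge> 1" and f: "f \<in> bergman_space \<alpha>" and nf: "bergman_norm \<alpha> f = 1"
  shows "bergman_inner \<alpha> (f \<circ> (\<lambda>z. om n * z)) f \<in> convex hull ((\<lambda>k. om n ^ k) ` {..<n})"
proof -
  define u where "u = om n"
  define c where "c = cnj u"
  have u1: "norm u = 1" unfolding u_def by (rule om_norm)
  have un: "u ^ n = 1" unfolding u_def using n by (rule om_pow_n)
  have cn: "c ^ n = 1" unfolding c_def using un by (simp flip: complex_cnj_power)
  have uc: "u * c = 1" unfolding c_def using u1 by (rule uc_one)
  define g where "g = (\<lambda>j z. (1 / of_nat n) * (\<Sum>k<n. c ^ (j * k) * f (u ^ k * z)))"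
  have gsp: "g j \<in> bergman_space \<alpha>" for j
  proof -
    have "(\<lambda>z. c ^ (j * k) * f (u ^ k * z)) \<in> bergman_space \<alpha>" for k
      using sp_cmult[OF a sp_rot[OF a f, of "u ^ k"]] u1 by (simp add: norm_power)
    hence "(\<lambda>z. \<Sum>k<n. c ^ (j * k) * f (u ^ k * z)) \<in> bergman_space \<alpha>"
      by (intro sp_sum[OF a]) auto
    thus ?thesis unfolding g_def by (rule sp_cmult[OF a])
  qed
  have gu: "g j (u * z) = u ^ j * g j z" for j z
  proof -
    define h where "h = (\<lambda>k. c ^ (j * k) * f (u ^ k * z))"
    have hs: "c ^ (j * k) * f (u ^ k * (u * z)) = u ^ j * h (Suc k)" for k
    proof -
      have "u ^ j * h (Suc k) = (u ^ j * c ^ j) * c ^ (j * k) * f (u ^ Suc k * z)"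
        unfolding h_def by (simp add: power_add mult_ac)
      also have "u ^ j * c ^ j = 1" by (simp add: uc flip: power_mult_distrib)
      finally show ?thesis by (simp add: mult_ac)
    qed
    have hn: "h n = h 0"
    proof -
      have "c ^ (j * n) = 1" by (simp add: power_mult[of c n j, unfolded mult.commute[of n j]] cn)
      thus ?thesis unfolding h_def using un by simp
    qed
    have "g j (u * z) = (1 / of_nat n) * (\<Sum>k<n. u ^ j * h (Suc k))"
      unfolding g_def using hs by simp
    also have "\<dots> = (1 / of_nat n) * (u ^ j * (\<Sum>k<n. h k))"
    proof -
      have "(\<Sum>k<n. u ^ j * h (Suc k)) = u ^ j * (\<Sum>k<n. h (Suc k))" by (rule sum_distrib_left[symmetric])
      also have "\<dots> = u ^ j * (\<Sum>k<n. h k)" using periodic_sum[of h n, OF hn] by simp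
      finally show ?thesis by (simp only:)
    qed
    also have "\<dots> = u ^ j * g j z" unfolding g_def h_def by (simp add: mult_ac)
    finally show ?thesis .
  qed
  have fsum: "f z = (\<Sum>j<n. g j z)" for z
  proof -
    have geo: "(\<Sum>j<n. (c ^ k) ^ j) = (if k = 0 then of_nat n else 0)" if k: "k < n" for k
    proof (cases "k = 0")
      case False
      have "u ^ k \<noteq> 1" unfolding u_def using False k by (intro om_pow_ne1) auto
      hence ck: "c ^ k \<noteq> 1" unfolding c_def
        by (metis complex_cnj_one complex_cnj_power complex_cnj_cnj)
      have "(c ^ k) ^ n = 1" by (simp add: cn flip: power_mult power_mult_distrib[symmetric]) 
           (metis cn mult.commute power_mult power_one)
      then show ?thesis using ck False by (simp add: sum_gp_strict)
    qed simp
    have "(\<Sum>j<n. g j z) = (1 / of_nat n) * (\<Sum>j<n. \<Sum>k<n. c ^ (j * k) * f (u ^ k * z))"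
      unfolding g_def by (simp add: sum_distrib_left)
    also have "(\<Sum>j<n. \<Sum>k<n. c ^ (j * k) * f (u ^ k * z)) = (\<Sum>k<n. (\<Sum>j<n. (c ^ k) ^ j) * f (u ^ k * z))"
    proof -
      have pm: "\<And>j k. c ^ (j * k) = (c ^ k) ^ j" by (metis mult.commute power_mult)
      have "(\<Sum>j<n. \<Sum>k<n. c ^ (j * k) * f (u ^ k * z)) = (\<Sum>j<n. \<Sum>k<n. (c ^ k) ^ j * f (u ^ k * z))"
        by (simp only: pm)
      also have "\<dots> = (\<Sum>k<n. \<Sum>j<n. (c ^ k) ^ j * f (u ^ k * z))" by (rule sum.swap)
      also have "\<dots> = (\<Sum>k<n. (\<Sum>j<n. (c ^ k) ^ j) * f (u ^ k * z))" by (simp only: sum_distrib_right)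
      finally show ?thesis .
    qed
    also have "\<dots> = (\<Sum>k<n. (if k = 0 then of_nat n * f z else 0))"
      using geo by (intro sum.cong) auto
    also have "\<dots> = of_nat n * f z" using n by simp
    finally show ?thesis using n by simp
  qed
  have fe: "f = (\<lambda>z. \<Sum>j<n. g j z)" using fsum by auto
  have inj: "\<And>j m. j < n \<Longrightarrow> m < n \<Longrightarrow> j \<noteq> m \<Longrightarrow> u ^ j \<noteq> u ^ m"
    unfolding u_def by (rule om_pow_inj)
  note dc = decomp[OF a u1 inj gsp gu]
  define N where "N = (\<lambda>j. LINT z:D|lborel. bergman_weight \<alpha> z * (cmod (g j z))\<^sup>2)"
  have gg: "bergman_inner \<alpha> (g j) (g j) = complex_of_real (N j)" for j
    unfolding N_def by (rule ip_self)
  have N0: "0 \<le> N j" for j unfolding N_def by (rule lint_nonneg[OF a])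
  have "bergman_inner \<alpha> f f = 1"
    using ip_self[of \<alpha> f] nf by (simp add: norm_one_iff)
  hence "complex_of_real (\<Sum>j<n. N j) = 1"
    using dc(2) fe gg by simp
  hence N1: "(\<Sum>j<n. N j) = 1" by (simp only: of_real_eq_1_iff)
  have "bergman_inner \<alpha> (f \<circ> (\<lambda>z. om n * z)) f = bergman_inner \<alpha> (\<lambda>z. \<Sum>j<n. g j (u * z)) (\<lambda>z. \<Sum>j<n. g j z)"
    by (subst (1 2) fe) (simp add: o_def u_def)
  also have "\<dots> = (\<Sum>j<n. N j *\<^sub>R u ^ j)"
    using dc(1) gg by (simp add: scaleR_conv_of_real mult.commute)
  also have "\<dots> \<in> convex hull ((\<lambda>k. om n ^ k) ` {..<n})"
    by (rule convex_sum) (auto simp: N1 N0 u_def intro: hull_inc)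
  finally show ?thesis .
qed



lemma hull_sup:
  assumes a: "\<alpha> > -1" and n: "n \<ge> 1" and p: "p \<in> convex hull ((\<lambda>k. om n ^ k) ` {..<n})"
  shows "\<exists>f. f \<in> bergman_space \<alpha> \<and> bergman_norm \<alpha> f = 1 \<and> p = bergman_inner \<alpha> (f \<circ> (\<lambda>z. om n * z)) f"
proof -
  define u where "u = om n"
  define S where "S = (\<lambda>k. u ^ k) ` {..<n}"
  have u1: "norm u = 1" unfolding u_def by (rule om_norm)
  have inj: "\<And>j m. j < n \<Longrightarrow> m < n \<Longrightarrow> j \<noteq> m \<Longrightarrow> u ^ j \<noteq> u ^ m"
    unfolding u_def by (rule om_pow_inj)
  have injo: "inj_on (\<lambda>k. u ^ k) {..<n}" using inj by (auto simp: inj_on_def)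
  have "finite S" unfolding S_def by simp
  from p[folded u_def, folded S_def, unfolded convex_hull_finite[OF this]]
  obtain v where v0: "\<forall>x\<in>S. 0 \<le> v x" and vs: "sum v S = 1" and vp: "(\<Sum>x\<in>S. v x *\<^sub>R x) = p"
    by blast
  define t where "t = (\<lambda>k. v (u ^ k))"
  have t0: "0 \<le> t k" if "k < n" for k using v0 that unfolding t_def S_def by auto
  have ts: "(\<Sum>k<n. t k) = 1" using vs unfolding S_def t_def by (simp add: sum.reindex[OF injo])
  have tp: "(\<Sum>k<n. t k *\<^sub>R u ^ k) = p" using vp unfolding S_def t_def by (simp add: sum.reindex[OF injo])
  define M where "M = (\<lambda>j. LINT z:D|lborel. bergman_weight \<alpha> z * (cmod (z ^ j))\<^sup>2)"
  have M0: "0 < M j" for j unfolding M_def by (rule Mpos[OF a])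
  define s where "s = (\<lambda>j. sqrt (t j / M j))"
  define g where "g = (\<lambda>j z. complex_of_real (s j) * z ^ j)"
  have gsp: "g j \<in> bergman_space \<alpha>" for j unfolding g_def by (rule sp_cmult[OF a sp_pow[OF a]])
  have gu: "g j (u * z) = u ^ j * g j z" for j z unfolding g_def by (simp add: power_mult_distrib mult_ac)
  have gg: "bergman_inner \<alpha> (g j) (g j) = complex_of_real (t j)" if j: "j < n" for j
  proof -
    have "bergman_inner \<alpha> (g j) (g j) = complex_of_real (s j) * cnj (complex_of_real (s j)) * bergman_inner \<alpha> (\<lambda>z. z ^ j) (\<lambda>z. z ^ j)"
      unfolding g_def by (rule ip_scale)
    also have "bergman_inner \<alpha> (\<lambda>z. z ^ j) (\<lambda>z. z ^ j) = complex_of_real (M j)"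
      unfolding M_def by (rule ip_self)
    also have "complex_of_real (s j) * cnj (complex_of_real (s j)) * complex_of_real (M j) = complex_of_real (s j * s j * M j)"
      by simp
    also have "s j * s j * M j = t j"
      using t0[OF j] M0[of j] unfolding s_def by (simp add: real_sqrt_mult[symmetric])
    finally show ?thesis .
  qed
  define F where "F = (\<lambda>z. \<Sum>j<n. g j z)"
  have Fsp: "F \<in> bergman_space \<alpha>" unfolding F_def by (intro sp_sum[OF a] gsp) auto
  note dc = decomp[OF a u1 inj gsp gu]
  have "bergman_inner \<alpha> F F = (\<Sum>j<n. bergman_inner \<alpha> (g j) (g j))"
    unfolding F_def by (rule dc(2))
  also have "\<dots> = (\<Sum>j<n. complex_of_real (t j))" using gg by simp
  also have "\<dots> = 1" using ts by (simp flip: of_real_sum)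
  finally have "bergman_inner \<alpha> F F = 1" .
  hence "complex_of_real (LINT z:D|lborel. bergman_weight \<alpha> z * (cmod (F z))\<^sup>2) = 1"
    by (simp add: ip_self)
  hence Fn: "bergman_norm \<alpha> F = 1" unfolding norm_one_iff by (simp only: of_real_eq_1_iff)
  have "bergman_inner \<alpha> (F \<circ> (\<lambda>z. om n * z)) F = bergman_inner \<alpha> (\<lambda>z. \<Sum>j<n. g j (u * z)) (\<lambda>z. \<Sum>j<n. g j z)"
    unfolding F_def o_def u_def ..
  also have "\<dots> = (\<Sum>j<n. u ^ j * bergman_inner \<alpha> (g j) (g j))" by (rule dc(1))
  also have "\<dots> = (\<Sum>j<n. u ^ j * complex_of_real (t j))" using gg by simp
  also have "\<dots> = p" unfolding tp[symmetric] by (simp add: scaleR_conv_of_real mult.commute)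
  finally show ?thesis using Fsp Fn by blast
qed



lemma general:
  assumes a: "\<alpha> > -1" and n: "n \<ge> 1"
  shows "comp_numerical_range \<alpha> (\<lambda>z. exp (2 * pi * \<i> / of_nat n) * z) =
           convex hull {exp (2 * pi * \<i> * of_nat k / of_nat n) | k. k < n}"
proof -
  have phi: "(\<lambda>z. exp (2 * pi * \<i> / of_nat n) * z) = (\<lambda>z. om n * z)" by (simp add: om_def)
  have Seq: "{exp (2 * pi * \<i> * of_nat k / of_nat n) | k. k < n} = (\<lambda>k. om n ^ k) ` {..<n}"
    by (auto simp: om_pow)
  show ?thesis
    unfolding phi Seq comp_numerical_range_def
  proof
    show "{bergman_inner \<alpha> (f \<circ> (\<lambda>z. om n * z)) f |f. f \<in> bergman_space \<alpha> \<and> bergman_norm \<alpha> f = 1}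
        \<subseteq> convex hull (\<lambda>k. om n ^ k) ` {..<n}"
      using hull_sub[OF a n] by blast
    show "convex hull (\<lambda>k. om n ^ k) ` {..<n}
        \<subseteq> {bergman_inner \<alpha> (f \<circ> (\<lambda>z. om n * z)) f |f. f \<in> bergman_space \<alpha> \<and> bergman_norm \<alpha> f = 1}"
    proof
      fix p assume "p \<in> convex hull (\<lambda>k. om n ^ k) ` {..<n}"
      from hull_sup[OF a n this] show "p \<in> {bergman_inner \<alpha> (f \<circ> (\<lambda>z. om n * z)) f |f. f \<in> bergman_space \<alpha> \<and> bergman_norm \<alpha> f = 1}"
        by blast
    qed
  qed
qed

lemma om2: "om 2 = -1"
proof -
  have sq: "om 2 ^ 2 = 1" by (rule om_pow_n) simp
  have ne: "om 2 ^ 1 \<noteq> 1" by (rule om_pow_ne1) auto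
  have "(om 2 - 1) * (om 2 + 1) = 0" using sq by (simp add: algebra_simps power2_eq_square)
  thus ?thesis using ne by (simp add: add_eq_0_iff2)
qed

lemma hull2: "convex hull {1, -1 :: complex} = {complex_of_real t | t. -1 \<le> t \<and> t \<le> 1}"
proof -
  have "convex hull {1, -1 :: complex} = closed_segment 1 (-1)" by (simp add: segment_convex_hull)
  also have "\<dots> = {complex_of_real t | t. -1 \<le> t \<and> t \<le> 1}"
  proof
    show "closed_segment 1 (-1) \<subseteq> {complex_of_real t | t. -1 \<le> t \<and> t \<le> 1}"
    proof
      fix x assume "x \<in> closed_segment (1::complex) (-1)"
      then obtain v where v: "0 \<le> v" "v \<le> 1" "x = (1 - v) *\<^sub>R 1 + v *\<^sub>R (-1)"
        unfolding closed_segment_def by blast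
      hence "x = complex_of_real (1 - 2 * v)" by (simp add: scaleR_conv_of_real algebra_simps)
      moreover have "-1 \<le> 1 - 2 * v" "1 - 2 * v \<le> 1" using v by auto
      ultimately show "x \<in> {complex_of_real t | t. -1 \<le> t \<and> t \<le> 1}" by blast
    qed
    show "{complex_of_real t | t. -1 \<le> t \<and> t \<le> 1} \<subseteq> closed_segment 1 (-1)"
    proof
      fix x assume "x \<in> {complex_of_real t | t. -1 \<le> t \<and> t \<le> 1}"
      then obtain t where t: "-1 \<le> t" "t \<le> 1" "x = complex_of_real t" by blast
      define v where "v = (1 - t) / 2"
      have "x = (1 - v) *\<^sub>R 1 + v *\<^sub>R (-1)" using t unfolding v_def
        by (simp add: scaleR_conv_of_real algebra_simps) (simp add: field_simps)
      moreover have "0 \<le> v" "v \<le> 1" using t unfolding v_def by auto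
      ultimately show "x \<in> closed_segment 1 (-1)" unfolding closed_segment_def by blast
    qed
  qed
  finally show ?thesis .
qed

theorem corollary3p14:
  fixes \<alpha> :: real
  assumes "\<alpha> > -1"
  shows "comp_numerical_range \<alpha> (\<lambda>z. - z) = {complex_of_real t | t. -1 \<le> t \<and> t \<le> 1} \<and>
    (\<forall>n::nat. n > 2 \<longrightarrow> comp_numerical_range \<alpha> (\<lambda>z. exp (2 * pi * \<i> / of_nat n) * z) =
           convex hull {exp (2 * pi * \<i> * of_nat k / of_nat n) | k. k < n})"
proof
  show "\<forall>n::nat. n > 2 \<longrightarrow> comp_numerical_range \<alpha> (\<lambda>z. exp (2 * pi * \<i> / of_nat n) * z) =
           convex hull {exp (2 * pi * \<i> * of_nat k / of_nat n) | k. k < n}"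
    using general[OF assms] by auto
  have g2: "comp_numerical_range \<alpha> (\<lambda>z. exp (2 * pi * \<i> / of_nat 2) * z) =
           convex hull {exp (2 * pi * \<i> * of_nat k / of_nat 2) | k. k < (2::nat)}"
    using general[OF assms, of 2] by simp
  have e1: "(\<lambda>z. exp (2 * pi * \<i> / of_nat 2) * z) = (\<lambda>z. - z)"
    using om2 unfolding om_def by simp
  have e2: "{exp (2 * pi * \<i> * of_nat k / of_nat 2) | k. k < (2::nat)} = {1, -1}"
  proof -
    have "{exp (2 * pi * \<i> * of_nat k / of_nat 2) | k. k < (2::nat)} = (\<lambda>k. om 2 ^ k) ` {..<2}"
      by (auto simp: om_pow)
    also have "{..<2::nat} = {0, 1}" by auto
    finally show ?thesis using om2 by simp
  qed
  show "comp_numerical_range \<alpha> (\<lambda>z. - z) = {complex_of_real t | t. -1 \<le> t \<and> t \<le> 1}"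
    using g2 unfolding e1 e2 hull2 .
qed


end
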